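(* Let $N$ be a positive odd integer, $\alpha,\beta$ real with $((\alpha+1)/2)_k\neq0$ and $((\alpha+3)/2)_k\ne0$ for $k\le (N-1)/2$, and put $\eta=\tfrac{\alpha+\beta+2}{4}$. Let $P_n$ be the monic dual $-1$ Hahn polynomials defined in the context. Then, as polynomial identities in $x$, for $0\le n\le (N-1)/2$: $$P_{2n}(x-1)=16^n\left(\tfrac{1-N}{2}\right)_n\left(\tfrac{\alpha+1}{2}\right)_n\;{}_3F_2\!\left(\begin{matrix}-n,\ \eta+\tfrac x4,\ \eta-\tfrac x4\\ -\tfrac{N-1}{2},\ \tfrac{\alpha+1}{2}\end{matrix};1\right),$$ $$P_{2n+1}(x-1)=16^n\left(\tfrac{1-N}{2}\right)_n\left(\tfrac{\alpha+3}{2}\right)_n\,(x+\alpha-\beta)\;{}_3F_2\!\left(\begin{matrix}-n,\ \eta+\tfrac x4,\ \eta-\tfrac x4\\ -\tfrac{N-1}{2},\ \tfrac{\alpha+3}{2}\end{matrix};1\right).$$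
   Context: $(c)_k=c(c+1)\cdots(c+k-1)$, $(c)_0=1$, and ${}_3F_2\!\left(\begin{matrix}-n,a_2,a_3\\ b_1,b_2\end{matrix};1\right)=\sum_{k=0}^n\frac{(-n)_k(a_2)_k(a_3)_k}{(b_1)_k(b_2)_k\,k!}$. For $N$ odd: $b_n^{(-1)}=-1-\alpha+\beta$ for $n$ even, $b_n^{(-1)}=-1+\alpha-\beta$ for $n$ odd; $u_n^{(-1)}=4n(N+1-n)$ for $n$ even, $u_n^{(-1)}=4(\alpha+n)(\beta+N+1-n)$ for $n$ odd. The monic dual $-1$ Hahn polynomials are defined by $P_{-1}=0$, $P_0=1$, $P_{n+1}(x)=(x-b_n^{(-1)})P_n(x)-u_n^{(-1)}P_{n-1}(x)$ for $n\ge0$. *)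

theory Defs
  imports Complex_Main
begin

definition bcoef :: "real \<Rightarrow> real \<Rightarrow> nat \<Rightarrow> real" where
  "bcoef \<alpha> \<beta> n = (if even n then -1 - \<alpha> + \<beta> else -1 + \<alpha> - \<beta>)"

definition ucoef :: "real \<Rightarrow> real \<Rightarrow> nat \<Rightarrow> nat \<Rightarrow> real" where
  "ucoef \<alpha> \<beta> N n = (if even n then 4 * real n * (real N + 1 - real n)
                        else 4 * (\<alpha> + real n) * (\<beta> + real N + 1 - real n))"

text \<open>Monic dual -1 Hahn polynomial P_n evaluated at x:
  P_0 = 1, P_1 = x - b_0 (since P_{-1} = 0),
  P_{n+2} = (x - b_{n+1}) P_{n+1} - u_{n+1} P_n.\<close>
fun dmH :: "real \<Rightarrow> real \<Rightarrow> nat \<Rightarrow> nat \<Rightarrow> real \<Rightarrow> real" where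
  "dmH \<alpha> \<beta> N 0 x = 1"
| "dmH \<alpha> \<beta> N (Suc 0) x = x - bcoef \<alpha> \<beta> 0"
| "dmH \<alpha> \<beta> N (Suc (Suc n)) x =
     (x - bcoef \<alpha> \<beta> (Suc n)) * dmH \<alpha> \<beta> N (Suc n) x
     - ucoef \<alpha> \<beta> N (Suc n) * dmH \<alpha> \<beta> N n x"

definition hyp3F2 :: "nat \<Rightarrow> real \<Rightarrow> real \<Rightarrow> real \<Rightarrow> real \<Rightarrow> real" where
  "hyp3F2 n a2 a3 b1 b2 =
     (\<Sum>k=0..n. pochhammer (- real n) k * pochhammer a2 k * pochhammer a3 k
                 / (pochhammer b1 k * pochhammer b2 k * fact k))"

end

theory Submission imports Defs begin

definition ec :: "real \<Rightarrow> real \<Rightarrow> nat \<Rightarrow> nat \<Rightarrow> real" where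
 "ec M A n k = (-1)^k * real (n choose k) * pochhammer (real k - M) (n-k) * pochhammer (A + real k) (n-k)"

lemma C1:
  assumes "k \<le> Suc n"
  shows "ec M (A+1) (Suc n) k = ec M A (Suc n) k - (real n + 1) * (M - real n) * ec M (A+1) n k"
proof (cases "k = Suc n")
  case True then show ?thesis by (simp add: ec_def)
next
  case False
  then have kn: "k \<le> n" using assms by simp
  define m where "m = n - k"
  have sm: "Suc n - k = Suc m" using kn m_def by simp
  have nm: "n - k = m" using m_def by simp
  have nkm: "real n = real k + real m" using kn m_def by simp
  define P where "P = pochhammer (real k - M) m"
  define Q where "Q = pochhammer (A + 1 + real k) m"
  have p1: "pochhammer (real k - M) (Suc m) = P * (real n - M)"
    unfolding P_def pochhammer_Suc nkm by (simp add: algebra_simps)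
  have q1: "pochhammer (A + 1 + real k) (Suc m) = Q * (A + 1 + real n)"
    unfolding Q_def pochhammer_Suc nkm by (simp add: algebra_simps)
  have q0: "pochhammer (A + real k) (Suc m) = (A + real k) * Q"
    unfolding Q_def pochhammer_rec by (simp add: algebra_simps)
  have b: "real (Suc n - k) * real (Suc n choose k) = real (Suc n) * real (n choose k)"
    by (metis binomial_absorb_comp diff_Suc_1 of_nat_mult)
  have b': "real (Suc m) * real (Suc n choose k) = (real n + 1) * real (n choose k)"
    using b sm by simp
  show ?thesis
  proof -
    have key: "real(Suc n choose k) * (A+1+real n) = real(Suc n choose k)*(A+real k) + (real n+1)*real(n choose k)"
      using b' nkm by (simp add: algebra_simps)
    have "ec M (A+1) (Suc n) k = (-1)^k * real(Suc n choose k) * (P * (real n - M)) * (Q * (A+1+real n))"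
      unfolding ec_def sm p1 q1[symmetric] by (simp add: add.assoc)
    also have "\<dots> = (-1)^k * (P*Q*(real n - M)) * (real(Suc n choose k) * (A+1+real n))" by (simp add: algebra_simps)
    also have "\<dots> = (-1)^k * (P*Q*(real n - M)) * (real(Suc n choose k)*(A+real k) + (real n+1)*real(n choose k))" using key by simp
    also have "\<dots> = ec M A (Suc n) k - (real n + 1) * (M - real n) * ec M (A+1) n k"
      unfolding ec_def sm nm p1 q0 P_def Q_def by (simp add: algebra_simps)
    finally show ?thesis .
  qed
qed

lemma C2:
  assumes "k \<le> Suc n"
  shows "ec M A (Suc n) k = (A + real k)*(B + real k)*ec M (A+1) n k
     - (A+real n)*(B+M-real n)*ec M A n k - (if k=0 then 0 else ec M (A+1) n (k-1))"
proof (cases "k = Suc n")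
  case True then show ?thesis by (simp add: ec_def)
next
  case False
  then have kn: "k \<le> n" using assms by simp
  define m where "m = n - k"
  have sm: "Suc n - k = Suc m" using kn m_def by simp
  have nm: "n - k = m" using m_def by simp
  have nkm: "real n = real k + real m" using kn m_def by simp
  define P where "P = pochhammer (real k - M) m"
  define Q where "Q = pochhammer (A + 1 + real k) m"
  define Q0 where "Q0 = pochhammer (A + real k) m"
  have p1: "pochhammer (real k - M) (Suc m) = P * (real n - M)"
    unfolding P_def pochhammer_Suc nkm by (simp add: algebra_simps)
  have q0: "pochhammer (A + real k) (Suc m) = (A + real k) * Q"
    unfolding Q_def pochhammer_rec by (simp add: algebra_simps)
  have q00: "pochhammer (A + real k) (Suc m) = Q0 * (A + real n)"
    unfolding Q0_def pochhammer_Suc nkm by (simp add: algebra_simps)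
  have qq: "(A + real n) * Q0 = (A + real k) * Q" using q0 q00 by (simp add: mult.commute)
  define D where "D = (if k=0 then 0 else (-((-1)^k)) * real(n choose (k-1)) * (real k - 1 - M) * P * ((A+real k)*Q))"
  have DD: "(if k=0 then 0 else ec M (A+1) n (k-1)) = D"
  proof (cases k)
    case 0 then show ?thesis by (simp add: D_def)
  next
    case (Suc j)
    have nj: "n - j = Suc m" using Suc sm by simp
    have pj: "pochhammer (real j - M) (Suc m) = (real k - 1 - M) * P"
      unfolding P_def pochhammer_rec Suc by (simp add: algebra_simps)
    have qj: "pochhammer (A + 1 + real j) (Suc m) = (A + real k) * Q"
      unfolding Q_def pochhammer_rec Suc by (simp add: algebra_simps)
    have "ec M (A+1) n (k-1) = (-1)^j * real (n choose j) * ((real k - 1 - M)*P) * ((A+real k)*Q)"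
      unfolding ec_def Suc diff_Suc_1 nj pj qj by simp
    then show ?thesis unfolding D_def using Suc by simp
  qed
  have key: "real(Suc n choose k) * (real n - M) = real(n choose k)*(real k + real n - M)
      + (if k = 0 then 0 else real(n choose (k-1)) * (real k - 1 - M))"
  proof (cases k)
    case 0 then show ?thesis by simp
  next
    case (Suc j)
    have "Suc j * (n choose Suc j) = (n - j) * (n choose j)"
      by (metis binomial_absorption binomial_absorb_comp)
    then have e: "real (Suc j) * real (n choose Suc j) = (real n - real j) * real (n choose j)"
      using Suc kn by (metis of_nat_diff of_nat_mult Suc_leD)
    show ?thesis using Suc e by (simp add: algebra_simps)
  qed
  have "ec M A (Suc n) k = (-1)^k * (P*(A + real k)*Q) * (real(Suc n choose k) * (real n - M))"
    unfolding ec_def sm p1 q0 by (simp add: algebra_simps)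
  also have "\<dots> = (-1)^k * (P*(A + real k)*Q) * (real(n choose k)*(real k + real n - M)
      + (if k = 0 then 0 else real(n choose (k-1)) * (real k - 1 - M)))" using key by simp
  also have "\<dots> = (A + real k)*(B + real k)*ec M (A+1) n k
     - (B+M-real n)*((A+real n)* Q0) * ((-1)^k * real (n choose k) * P) - D"
    unfolding ec_def nm P_def[symmetric] Q_def[symmetric] D_def qq by (simp add: algebra_simps)
  also have "\<dots> = (A + real k)*(B + real k)*ec M (A+1) n k
     - (A+real n)*(B+M-real n)*ec M A n k - D"
    unfolding ec_def nm P_def[symmetric] Q0_def[symmetric] by (simp add: algebra_simps)
  finally show ?thesis using DD by simp
qed

definition qq :: "real \<Rightarrow> real \<Rightarrow> nat \<Rightarrow> real" where
  "qq a b k = pochhammer a k * pochhammer b k"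
definition EE :: "real \<Rightarrow> real \<Rightarrow> real \<Rightarrow> real \<Rightarrow> nat \<Rightarrow> real" where
  "EE M A a b n = (\<Sum>k\<le>n. ec M A n k * qq a b k)"

lemma ec_out: "k > n \<Longrightarrow> ec M A n k = 0" by (simp add: ec_def)

lemma EE_ext: "(\<Sum>k\<le>Suc n. ec M A n k * qq a b k) = EE M A a b n"
  by (simp add: EE_def ec_out)

lemma I1: "EE M (A+1) a b (Suc n) = EE M A a b (Suc n) - (real n + 1) * (M - real n) * EE M (A+1) a b n"
proof -
  have "EE M (A+1) a b (Suc n) = (\<Sum>k\<le>Suc n. (ec M A (Suc n) k - (real n + 1) * (M - real n) * ec M (A+1) n k) * qq a b k)"
    unfolding EE_def by (rule sum.cong) (auto simp: C1)
  also have "\<dots> = EE M A a b (Suc n) - (real n + 1) * (M - real n) * (\<Sum>k\<le>Suc n. ec M (A+1) n k * qq a b k)"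
    unfolding EE_def by (simp only: left_diff_distrib sum_subtractf sum_distrib_left mult.assoc)
  finally show ?thesis unfolding EE_ext .
qed

lemma I2:
  assumes H: "\<And>k. (a + real k) * (b + real k) = (A + real k) * (B + real k) - t"
  shows "EE M A a b (Suc n) = t * EE M (A+1) a b n - (A + real n) * (B + M - real n) * EE M A a b n"
proof -
  have qs: "t * qq a b k = (A + real k) * (B + real k) * qq a b k - qq a b (Suc k)" for k
  proof -
    have e: "qq a b (Suc k) = qq a b k * ((a + real k) * (b + real k))"
      unfolding qq_def pochhammer_Suc by (simp add: algebra_simps)
    show ?thesis unfolding e H by (simp add: algebra_simps)
  qed
  have sh: "(\<Sum>k\<le>n. ec M (A+1) n k * qq a b (Suc k)) =
      (\<Sum>k\<le>Suc n. (if k = 0 then 0 else ec M (A+1) n (k-1)) * qq a b k)"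
    by (subst sum.atMost_Suc_shift) simp
  have "t * EE M (A+1) a b n - (A + real n) * (B + M - real n) * EE M A a b n
     = (\<Sum>k\<le>n. ec M (A+1) n k * (t * qq a b k)) - (A + real n) * (B + M - real n) * EE M A a b n"
    unfolding EE_def by (simp add: sum_distrib_left algebra_simps)
  also have "\<dots> = (\<Sum>k\<le>n. (A + real k) * (B + real k) * ec M (A+1) n k * qq a b k)
     - (\<Sum>k\<le>n. ec M (A+1) n k * qq a b (Suc k)) - (A + real n) * (B + M - real n) * EE M A a b n"
    unfolding qs by (simp add: algebra_simps sum_subtractf)
  also have "\<dots> = (\<Sum>k\<le>Suc n. (A + real k) * (B + real k) * ec M (A+1) n k * qq a b k)
     - (\<Sum>k\<le>Suc n. (if k = 0 then 0 else ec M (A+1) n (k-1)) * qq a b k)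
     - (A + real n) * (B + M - real n) * (\<Sum>k\<le>Suc n. ec M A n k * qq a b k)"
    unfolding sh EE_ext by (simp add: ec_out)
  also have "\<dots> = (\<Sum>k\<le>Suc n. ((A + real k)*(B + real k)*ec M (A+1) n k
     - (A+real n)*(B+M-real n)*ec M A n k - (if k=0 then 0 else ec M (A+1) n (k-1))) * qq a b k)"
    by (simp only: left_diff_distrib sum_subtractf sum_distrib_left mult.assoc)
  also have "\<dots> = EE M A a b (Suc n)"
    unfolding EE_def by (rule sum.cong) (auto simp: C2[symmetric])
  finally show ?thesis by simp
qed

lemma mainrec:
  fixes N :: nat and \<alpha> \<beta> x M :: real
  assumes NM: "real N = 2*M + 1"
  defines "A \<equiv> (\<alpha>+1)/2" and "B \<equiv> (\<beta>+1)/2"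
    and "a \<equiv> (\<alpha> + \<beta> + 2) / 4 + x / 4" and "b \<equiv> (\<alpha> + \<beta> + 2) / 4 - x / 4"
  shows "dmH \<alpha> \<beta> N (2*n) (x-1) = 16^n * EE M A a b n \<and>
         dmH \<alpha> \<beta> N (2*n+1) (x-1) = 16^n * (x + \<alpha> - \<beta>) * EE M (A+1) a b n"
proof (induction n)
  case 0
  then show ?case by (simp add: EE_def ec_def qq_def bcoef_def)
next
  case (Suc n)
  have e0: "dmH \<alpha> \<beta> N (2*n) (x-1) = 16^n * EE M A a b n" using Suc.IH by simp
  have e1: "dmH \<alpha> \<beta> N (Suc (2*n)) (x-1) = 16^n * (x + \<alpha> - \<beta>) * EE M (A+1) a b n" using Suc.IH by simp
  define t where "t = (x - \<alpha> + \<beta>) * (x + \<alpha> - \<beta>) / 16"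
  have H: "(a + real k) * (b + real k) = (A + real k) * (B + real k) - t" for k
    unfolding a_def b_def A_def B_def t_def by (simp add: field_simps)
  have i2: "EE M A a b (Suc n) = t * EE M (A+1) a b n - (A + real n) * (B + M - real n) * EE M A a b n"
    by (rule I2[OF H])
  have i1: "EE M (A+1) a b (Suc n) = EE M A a b (Suc n) - (real n + 1) * (M - real n) * EE M (A+1) a b n"
    by (rule I1)
  have d2: "dmH \<alpha> \<beta> N (2*Suc n) (x-1) = (x - \<alpha> + \<beta>) * dmH \<alpha> \<beta> N (Suc (2*n)) (x-1)
      - 4 * (\<alpha> + 2*real n + 1) * (\<beta> + real N - 2 * real n) * dmH \<alpha> \<beta> N (2*n) (x-1)"
    by (simp add: bcoef_def ucoef_def algebra_simps)
  have d3: "dmH \<alpha> \<beta> N (2*Suc n + 1) (x-1) = (x + \<alpha> - \<beta>) * dmH \<alpha> \<beta> N (2*Suc n) (x-1)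
      - 16 * (real n + 1) * (M - real n) * dmH \<alpha> \<beta> N (Suc (2*n)) (x-1)"
  proof -
    have "2*Suc n + 1 = Suc (Suc (Suc (2*n)))" by simp
    then show ?thesis using NM by (simp add: bcoef_def ucoef_def algebra_simps)
  qed
  have E2: "dmH \<alpha> \<beta> N (2*Suc n) (x-1) = 16^Suc n * EE M A a b (Suc n)"
  proof -
    have gen: "(x-\<alpha>+\<beta>)*(16^n*(x+\<alpha>-\<beta>)*R) - 4*(\<alpha>+2*real n+1)*(\<beta>+(2*M+1)-2*real n)*(16^n*E)
       = 16^Suc n * (t*R - (A+real n)*(B+M-real n)*E)" for E R
      by (simp add: t_def A_def B_def field_simps)
    show ?thesis unfolding d2 e0 e1 i2 NM gen ..
  qed
  have E3: "dmH \<alpha> \<beta> N (2*Suc n + 1) (x-1) = 16^Suc n * (x + \<alpha> - \<beta>) * EE M (A+1) a b (Suc n)"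
    unfolding d3 E2 e1 i1 by (simp add: algebra_simps)
  show ?case using E2 E3 by simp
qed

lemma negpoch: "pochhammer (- real n) k = (-1)^k * real (n choose k) * fact k"
proof -
  have "real (n choose k) = (-1)^k * pochhammer (- real n) k / fact k"
    by (simp add: binomial_gbinomial gbinomial_pochhammer)
  then have "(-1)^k * real (n choose k) * fact k = ((-1)^k * (-1)^k) * pochhammer (- real n) k"
    by simp
  also have "\<dots> = pochhammer (- real n) k" by (simp flip: power_mult_distrib)
  finally show ?thesis by simp
qed

lemma conv:
  assumes "n \<le> Mn" and Anz: "\<forall>k\<le>n. pochhammer A k \<noteq> 0"
  shows "pochhammer (- real Mn) n * pochhammer A n * hyp3F2 n a b (- real Mn) A = EE (real Mn) A a b n"
  unfolding hyp3F2_def EE_def sum_distrib_left atLeast0AtMost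
proof (rule sum.cong[OF refl])
  fix k assume "k \<in> {..n}"
  then have kn: "k \<le> n" by simp
  have Mnz: "pochhammer (- real Mn) k \<noteq> 0"
    using kn assms(1) by (auto simp: pochhammer_eq_0_iff)
  have Az: "pochhammer A k \<noteq> 0" using Anz kn by simp
  have p1: "pochhammer (- real Mn) n = pochhammer (- real Mn) k * pochhammer (real k - real Mn) (n-k)"
    using pochhammer_product[OF kn, of "- real Mn"] by (simp add: algebra_simps)
  have p2: "pochhammer A n = pochhammer A k * pochhammer (A + real k) (n-k)"
    using pochhammer_product[OF kn, of A] by simp
  show "pochhammer (- real Mn) n * pochhammer A n *
         (pochhammer (- real n) k * pochhammer a k * pochhammer b k /
          (pochhammer (- real Mn) k * pochhammer A k * fact k)) =
         ec (real Mn) A n k * qq a b k"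
    unfolding p1 p2 negpoch[of n k] ec_def qq_def using Mnz Az by (simp add: field_simps)
qed
theorem mainTheorem6:
  fixes N n :: nat and \<alpha> \<beta> :: real
  assumes "odd N"
    and "\<forall>k\<le>(N - 1) div 2. pochhammer ((\<alpha> + 1) / 2) k \<noteq> 0"
    and "\<forall>k\<le>(N - 1) div 2. pochhammer ((\<alpha> + 3) / 2) k \<noteq> 0"
    and "n \<le> (N - 1) div 2"
  shows "\<forall>x::real.
      dmH \<alpha> \<beta> N (2 * n) (x - 1) =
        16 ^ n * pochhammer ((1 - real N) / 2) n * pochhammer ((\<alpha> + 1) / 2) n *
        hyp3F2 n ((\<alpha> + \<beta> + 2) / 4 + x / 4) ((\<alpha> + \<beta> + 2) / 4 - x / 4)
               (- (real N - 1) / 2) ((\<alpha> + 1) / 2)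
    \<and> dmH \<alpha> \<beta> N (2 * n + 1) (x - 1) =
        16 ^ n * pochhammer ((1 - real N) / 2) n * pochhammer ((\<alpha> + 3) / 2) n *
        (x + \<alpha> - \<beta>) *
        hyp3F2 n ((\<alpha> + \<beta> + 2) / 4 + x / 4) ((\<alpha> + \<beta> + 2) / 4 - x / 4)
               (- (real N - 1) / 2) ((\<alpha> + 3) / 2)"
proof
  fix x :: real
  define Mn where "Mn = (N - 1) div 2"
  define M where "M = real Mn"
  have NN: "N = 2*Mn + 1" using assms(1) unfolding Mn_def by (auto elim: oddE)
  have NM: "real N = 2*M + 1" unfolding M_def by (subst NN) simp
  have m1: "(1 - real N) / 2 = - real Mn" using NM M_def by simp
  have m2: "- (real N - 1) / 2 = - real Mn" using NM M_def by simp
  have a3: "(\<alpha> + 3) / 2 = (\<alpha> + 1) / 2 + 1" by simp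
  have nle: "n \<le> Mn" using assms(4) Mn_def by simp
  have Anz1: "\<forall>k\<le>n. pochhammer ((\<alpha> + 1) / 2) k \<noteq> 0" using assms(2) nle Mn_def by auto
  have Anz3: "\<forall>k\<le>n. pochhammer ((\<alpha> + 1) / 2 + 1) k \<noteq> 0" using assms(3) nle Mn_def a3 by auto
  note R = mainrec[where x=x and n=n and \<alpha>=\<alpha> and \<beta>=\<beta>, OF NM]
  note C1 = conv[OF nle Anz1, of "(\<alpha> + \<beta> + 2) / 4 + x / 4" "(\<alpha> + \<beta> + 2) / 4 - x / 4"]
  note C3 = conv[OF nle Anz3, of "(\<alpha> + \<beta> + 2) / 4 + x / 4" "(\<alpha> + \<beta> + 2) / 4 - x / 4"]
  show "dmH \<alpha> \<beta> N (2 * n) (x - 1) =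
        16 ^ n * pochhammer ((1 - real N) / 2) n * pochhammer ((\<alpha> + 1) / 2) n *
        hyp3F2 n ((\<alpha> + \<beta> + 2) / 4 + x / 4) ((\<alpha> + \<beta> + 2) / 4 - x / 4)
               (- (real N - 1) / 2) ((\<alpha> + 1) / 2)
    \<and> dmH \<alpha> \<beta> N (2 * n + 1) (x - 1) =
        16 ^ n * pochhammer ((1 - real N) / 2) n * pochhammer ((\<alpha> + 3) / 2) n *
        (x + \<alpha> - \<beta>) *
        hyp3F2 n ((\<alpha> + \<beta> + 2) / 4 + x / 4) ((\<alpha> + \<beta> + 2) / 4 - x / 4)
               (- (real N - 1) / 2) ((\<alpha> + 3) / 2)"
    unfolding m1 m2 a3
  proof
    show "dmH \<alpha> \<beta> N (2 * n) (x - 1) =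
        16 ^ n * pochhammer (- real Mn) n * pochhammer ((\<alpha> + 1) / 2) n *
        hyp3F2 n ((\<alpha> + \<beta> + 2) / 4 + x / 4) ((\<alpha> + \<beta> + 2) / 4 - x / 4)
               (- real Mn) ((\<alpha> + 1) / 2)"
      using R C1 unfolding M_def by (simp add: mult.assoc)
    show "dmH \<alpha> \<beta> N (2 * n + 1) (x - 1) =
        16 ^ n * pochhammer (- real Mn) n * pochhammer ((\<alpha> + 1) / 2 + 1) n *
        (x + \<alpha> - \<beta>) *
        hyp3F2 n ((\<alpha> + \<beta> + 2) / 4 + x / 4) ((\<alpha> + \<beta> + 2) / 4 - x / 4)
               (- real Mn) ((\<alpha> + 1) / 2 + 1)"
    proof -
      have R2: "dmH \<alpha> \<beta> N (2 * n + 1) (x - 1) = 16 ^ n * (x + \<alpha> - \<beta>) *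
         EE M ((\<alpha> + 1) / 2 + 1) ((\<alpha> + \<beta> + 2) / 4 + x / 4) ((\<alpha> + \<beta> + 2) / 4 - x / 4) n"
        using R by blast
      show ?thesis unfolding R2 M_def C3[symmetric] by (simp only: mult_ac)
    qed
  qed
qed

end
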